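(* Let $L\ge3$, $m\ge1$, $x_1>\cdots>x_N$ real, $\mathbf X=(x_1,\dots,x_N)^T$. Let $A_{L,\mathrm{par}}(\mathbf X)$ be the set of all vectors obtainable as the (sign-normalized) output of a single sign-activated unit with hidden widths $m_1=\cdots=m_{L-2}=m$ and $m_{L-1}=1$. Then every vector in $A_{L,\mathrm{par}}(\mathbf X)$ belongs to $\mathcal H^{(m)}$, i.e. starts with $1$ and switches at most $m$ times.
   Context: $\sigma(x)=\mathrm{sign}(x)$ with $\mathrm{sign}(x)=1$ if $x\ge0$, $-1$ if $x<0$, applied entrywise. A single unit with widths $m_0=1,m_1,\dots,m_{L-1}=1$ maps $\mathbf X$ to $\mathbf X^{(L)}$ via $\mathbf X^{(1)}=\mathbf X$ and $\mathbf X^{(l+1)}=\sigma(\mathbf X^{(l)}\mathbf W^{(l)}+\mathbf 1\mathbf b^{(l)})\in\{-1,1\}^{N\times m_l}$ for $l\in[L-1]$, with arbitrary $\mathbf W^{(l)}\in\mathbb R^{m_{l-1}\times m_l}$, $\mathbf b^{(l)}\in\mathbb R^{1\times m_l}$. $A_{L,\mathrm{par}}(\mathbf X)$ is the set of all vectors $\epsilon\mathbf X^{(L)}\in\{-1,1\}^N$ over all such weights and biases, where $\epsilon\in\{-1,1\}$ is chosen so that the first entry is $1$. A vector $\mathbf h\in\{-1,1\}^N$ switches at $n>1$ if $h_n\neq h_{n-1}$; $\mathcal H^{(K)}$ is the set of vectors in $\{-1,1\}^N$ with first entry $1$ that switch at most $K$ times. *)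

theory Defs
  imports Complex_Main
begin

definition sign_act :: "real \<Rightarrow> real" where
  "sign_act x = (if x \<ge> 0 then 1 else -1)"

text \<open>Row n of the feature matrix X^(l), as a function of the scalar input t = x_n.
  w l is the width m_l (w 0 = m_0 = 1); W l and b l are the weight matrix W^(l)
  (entries W l i j, i < m_{l-1}, j < m_l) and bias b^(l).\<close>
primrec unit_feat ::
  "(nat \<Rightarrow> nat) \<Rightarrow> (nat \<Rightarrow> nat \<Rightarrow> nat \<Rightarrow> real) \<Rightarrow> (nat \<Rightarrow> nat \<Rightarrow> real)
   \<Rightarrow> real \<Rightarrow> nat \<Rightarrow> nat \<Rightarrow> real" where
  "unit_feat w W b t 0 = (\<lambda>j. if j = 0 then t else 0)"
| "unit_feat w W b t (Suc l) =
     (if l = 0 then (\<lambda>j. if j = 0 then t else 0)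
      else (\<lambda>j. sign_act ((\<Sum>i<w (l - 1). unit_feat w W b t l i * W l i j) + b l j)))"

text \<open>Vectors in {-1,1}^N are represented as functions on nat, with entries at
  indices 1..N and value 0 elsewhere.\<close>
definition A_par :: "nat \<Rightarrow> (nat \<Rightarrow> nat) \<Rightarrow> nat \<Rightarrow> (nat \<Rightarrow> real) \<Rightarrow> (nat \<Rightarrow> real) set" where
  "A_par L w N x = {h. \<exists>W b (\<epsilon>::real). \<epsilon> \<in> {-1, 1} \<and>
      \<epsilon> * unit_feat w W b (x 1) L 0 = 1 \<and>
      h = (\<lambda>n. if 1 \<le> n \<and> n \<le> N then \<epsilon> * unit_feat w W b (x n) L 0 else 0)}"

definition switches_at :: "(nat \<Rightarrow> real) \<Rightarrow> nat \<Rightarrow> bool" where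
  "switches_at h n \<longleftrightarrow> 1 < n \<and> h n \<noteq> h (n - 1)"

definition H_switch :: "nat \<Rightarrow> nat \<Rightarrow> (nat \<Rightarrow> real) set" where
  "H_switch N K = {h. (\<forall>n. 1 \<le> n \<and> n \<le> N \<longrightarrow> h n \<in> {-1, 1}) \<and>
      (\<forall>n. \<not> (1 \<le> n \<and> n \<le> N) \<longrightarrow> h n = 0) \<and> h 1 = 1 \<and>
      card {n \<in> {1..N}. switches_at h n} \<le> K}"

end

theory Submission
  imports Defs
begin

lemma feat2:
  assumes "w 0 = 1"
  shows "unit_feat w W b t 2 j = sign_act (t * W 1 0 j + b 1 j)"
  using assms by (simp add: numeral_2_eq_2)

lemma feat_dep:
  assumes "w 1 = m" and "\<forall>i<m. unit_feat w W b t 2 i = unit_feat w W b s 2 i"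
  shows "l \<ge> 3 \<Longrightarrow> unit_feat w W b t l = unit_feat w W b s l"
proof (induction l)
  case 0 then show ?case by simp
next
  case (Suc k)
  show ?case
  proof (cases "k = 2")
    case True
    have "(\<Sum>i<w 1. unit_feat w W b t 2 i * W 2 i j) = (\<Sum>i<w 1. unit_feat w W b s 2 i * W 2 i j)" for j
      using assms by (intro sum.cong) auto
    then show ?thesis using True unit_feat.simps(2)[of w W b t 2] unit_feat.simps(2)[of w W b s 2] by (simp del: unit_feat.simps)
  next
    case False
    then have "k \<ge> 3" using Suc.prems by simp
    then have "unit_feat w W b t k = unit_feat w W b s k" "k \<noteq> 0" using Suc.IH by simp_all
    then show ?thesis by simp
  qed
qed

lemma sign_pm: "sign_act y \<in> {-1, 1}"
  by (simp add: sign_act_def)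

lemma mono_change:
  fixes a c :: real and N n1 n2 :: nat and x :: "nat \<Rightarrow> real"
  assumes dec: "\<And>i j. 1 \<le> i \<Longrightarrow> i < j \<Longrightarrow> j \<le> N \<Longrightarrow> x j < x i"
    and n1: "2 \<le> n1" "n1 < n2" "n2 \<le> N"
    and c1: "(a * x n1 + c \<ge> 0) \<noteq> (a * x (n1 - 1) + c \<ge> 0)"
    and c2: "(a * x n2 + c \<ge> 0) \<noteq> (a * x (n2 - 1) + c \<ge> 0)"
  shows False
proof -
  define P where "P k = (a * x k + c \<ge> 0)" for k
  have xle: "x q \<le> x p" if "1 \<le> p" "p \<le> q" "q \<le> N" for p q :: nat
  proof (cases "p = q")
    case False
    then have "p < q" using that(2) by simp
    then show ?thesis using dec[of p q] that by simp
  qed simp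
  have mono: "P q \<Longrightarrow> P p" if "a \<ge> 0" "1 \<le> p" "p \<le> q" "q \<le> N" for p q
  proof -
    have "a * x q \<le> a * x p" using xle[of p q] that by (simp add: mult_left_mono)
    then show "P q \<Longrightarrow> P p" unfolding P_def by linarith
  qed
  have anti: "P p \<Longrightarrow> P q" if "a < 0" "1 \<le> p" "p \<le> q" "q \<le> N" for p q
  proof -
    have "a * x p \<le> a * x q" using xle[of p q] that by (simp add: mult_left_mono_neg)
    then show "P p \<Longrightarrow> P q" unfolding P_def by linarith
  qed
  have c1': "P n1 \<noteq> P (n1 - 1)" and c2': "P n2 \<noteq> P (n2 - 1)" using c1 c2 by (simp_all add: P_def)
  have b1: "1 \<le> n1 - 1" "n1 - 1 \<le> n1" "n1 \<le> N" "1 \<le> n1" "n1 \<le> n2 - 1"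
    "n2 - 1 \<le> N" "n1 \<le> n2" "n2 \<le> N"
    using n1 by auto
  show False
  proof (cases "a \<ge> 0")
    case True
    have a: "P (n1 - 1)" "\<not> P n1"
      using c1' mono[OF True b1(1,2,3)] by auto
    have "\<not> P (n2 - 1)" using mono[OF True b1(4,5,6)] a by auto
    then have "P n2" using c2' by auto
    then show False using mono[OF True b1(4,7,8)] a by auto
  next
    case False
    then have F: "a < 0" by simp
    have a: "\<not> P (n1 - 1)" "P n1"
      using c1' anti[OF F b1(1,2,3)] by auto
    have "P (n2 - 1)" using anti[OF F b1(4,5,6)] a by auto
    then have "\<not> P n2" using c2' by auto
    then show False using anti[OF F b1(4,7,8)] a by auto
  qed
qed

theorem proposition9:
  fixes L m N :: nat and x :: "nat \<Rightarrow> real"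
  assumes "L \<ge> 3" and "m \<ge> 1" and "N \<ge> 1"
    and "\<And>i j. 1 \<le> i \<Longrightarrow> i < j \<Longrightarrow> j \<le> N \<Longrightarrow> x j < x i"
  shows "A_par L (\<lambda>l. if l = 0 \<or> l = L - 1 then 1 else m) N x \<subseteq> H_switch N m"
proof
  fix h assume "h \<in> A_par L (\<lambda>l. if l = 0 \<or> l = L - 1 then 1 else m) N x"
  define w where "w = (\<lambda>l::nat. if l = 0 \<or> l = L - 1 then 1 else m)"
  obtain W b and \<epsilon> :: real where eps: "\<epsilon> \<in> {-1, 1}"
    and h1: "\<epsilon> * unit_feat w W b (x 1) L 0 = 1"
    and hdef: "h = (\<lambda>n. if 1 \<le> n \<and> n \<le> N then \<epsilon> * unit_feat w W b (x n) L 0 else 0)"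
    using \<open>h \<in> _\<close> unfolding A_par_def w_def by blast
  have w0: "w 0 = 1" and w1: "w 1 = m" using assms(1) by (auto simp: w_def)
  have Lpm: "unit_feat w W b t L 0 \<in> {-1, 1}" for t
  proof -
    obtain k where "L = Suc k" "k \<noteq> 0" using assms(1) by (cases L) auto
    then show ?thesis using sign_pm by simp
  qed
  define S where "S = {n \<in> {1..N}. switches_at h n}"
  define f where "f n = (SOME i. i < m \<and> unit_feat w W b (x n) 2 i \<noteq> unit_feat w W b (x (n - 1)) 2 i)" for n
  have fS: "f n < m \<and> unit_feat w W b (x n) 2 (f n) \<noteq> unit_feat w W b (x (n - 1)) 2 (f n)" if "n \<in> S" for n
  proof -
    have n: "1 < n" "n \<le> N" "h n \<noteq> h (n - 1)" using that by (auto simp: S_def switches_at_def)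
    have "unit_feat w W b (x n) L 0 \<noteq> unit_feat w W b (x (n - 1)) L 0"
      using n by (auto simp: hdef split: if_splits)
    then have "\<exists>i<m. unit_feat w W b (x n) 2 i \<noteq> unit_feat w W b (x (n - 1)) 2 i"
      using feat_dep[of w m W b "x n" "x (n - 1)" L, OF w1] assms(1) by metis
    then show ?thesis unfolding f_def by (rule someI_ex)
  qed
  have inj: "inj_on f S"
  proof (rule inj_onI, rule ccontr)
    fix p q assume pq: "p \<in> S" "q \<in> S" "f p = f q" "p \<noteq> q"
    have gen: False if "p' \<in> S" "q' \<in> S" "f p' = f q'" "p' < q'" for p' q'
    proof -
      let ?i = "f p'"
      have r: "1 < p'" "q' \<le> N" using that by (auto simp: S_def switches_at_def)
      have c1: "(W 1 0 ?i * x p' + b 1 ?i \<ge> 0) \<noteq> (W 1 0 ?i * x (p' - 1) + b 1 ?i \<ge> 0)"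
          using fS[OF that(1)] by (auto simp: feat2[where w=w, OF w0] sign_act_def mult.commute split: if_splits)
      have c2: "(W 1 0 ?i * x q' + b 1 ?i \<ge> 0) \<noteq> (W 1 0 ?i * x (q' - 1) + b 1 ?i \<ge> 0)"
          using fS[OF that(2)] that(3) by (auto simp: feat2[where w=w, OF w0] sign_act_def mult.commute split: if_splits)
      have r2: "2 \<le> p'" "p' < q'" "q' \<le> N" using r that by auto
      show False by (rule mono_change[OF assms(4) r2 c1 c2])
    qed
    show False
    proof (cases "p < q")
      case True then show ?thesis using gen pq by blast
    next
      case False then have "q < p" using pq by simp
      then show ?thesis using gen pq by metis
    qed
  qed
  have "card S \<le> card {..<m}"
    by (rule card_inj_on_le[OF inj]) (use fS in auto)
  then have cS: "card S \<le> m" by simp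
  show "h \<in> H_switch N m"
    unfolding H_switch_def
  proof (intro CollectI conjI allI impI)
    fix n assume "1 \<le> n \<and> n \<le> N"
    then show "h n \<in> {-1, 1}" using eps Lpm[of "x n"] by (auto simp: hdef)
  next
    fix n assume "\<not> (1 \<le> n \<and> n \<le> N)"
    then show "h n = 0" unfolding hdef by auto
  next
    show "h 1 = 1" using h1 assms(3) by (simp add: hdef)
  next
    show "card {n \<in> {1..N}. switches_at h n} \<le> m" using cS by (simp add: S_def)
  qed
qed

end
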